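(* Suppose $\sigma$ is an automorphism of $D$. Then $f(t)=t^3-a\in D[t;\sigma]$ is irreducible if and only if $\sigma^2(b)\sigma(b)b\neq a$ for all $b\in D$.
   Context: $D$ is an associative division ring, $\sigma$ a ring automorphism of $D$, and $D[t;\sigma]$ the skew polynomial ring with $ta=\sigma(a)t$. A polynomial $f$ is irreducible if it is not a unit and has no factorization $f=gh$ with $\deg g,\deg h<\deg f$. *)

theory Defs
  imports "HOL-Computational_Algebra.Polynomial"
begin

definition ring_automorphism :: "('a::division_ring \<Rightarrow> 'a) \<Rightarrow> bool" where
  "ring_automorphism \<sigma> \<longleftrightarrow> bij \<sigma> \<and> (\<forall>x y. \<sigma> (x + y) = \<sigma> x + \<sigma> y)
     \<and> (\<forall>x y. \<sigma> (x * y) = \<sigma> x * \<sigma> y) \<and> \<sigma> 1 = 1"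

text \<open>Skew polynomials D[t;sigma] are represented by their coefficient sequences
  (the type 'a poly, with its additive structure, coeff and degree); the product
  uses the rule t a = sigma(a) t, i.e.
  (sum a_i t^i)(sum b_j t^j) = sum a_i sigma^i(b_j) t^(i+j).\<close>
definition skew_mult :: "('a::division_ring \<Rightarrow> 'a) \<Rightarrow> 'a poly \<Rightarrow> 'a poly \<Rightarrow> 'a poly" where
  "skew_mult \<sigma> p q = (\<Sum>i\<le>degree p. \<Sum>j\<le>degree q.
       monom (coeff p i * (\<sigma> ^^ i) (coeff q j)) (i + j))"

definition skew_unit :: "('a::division_ring \<Rightarrow> 'a) \<Rightarrow> 'a poly \<Rightarrow> bool" where
  "skew_unit \<sigma> f \<longleftrightarrow> (\<exists>g. skew_mult \<sigma> f g = [:1:] \<and> skew_mult \<sigma> g f = [:1:])"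

definition skew_irreducible :: "('a::division_ring \<Rightarrow> 'a) \<Rightarrow> 'a poly \<Rightarrow> bool" where
  "skew_irreducible \<sigma> f \<longleftrightarrow> \<not> skew_unit \<sigma> f \<and>
     \<not> (\<exists>g h. f = skew_mult \<sigma> g h \<and> degree g < degree f \<and> degree h < degree f)"

end

theory Submission
  imports Defs
begin

lemma coeff_skew:
  "coeff (skew_mult \<sigma> p q) n = (\<Sum>i\<le>degree p. \<Sum>j\<le>degree q.
       if i + j = n then coeff p i * (\<sigma> ^^ i) (coeff q j) else 0)"
  unfolding skew_mult_def by (simp add: coeff_sum coeff_monom)

lemma coeff_skew_bound:
  assumes s0: "\<sigma> 0 = 0" and N: "degree p \<le> N" and M: "degree q \<le> M"
  shows "coeff (skew_mult \<sigma> p q) n = (\<Sum>i\<le>N. \<Sum>j\<le>M.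
       if i + j = n then coeff p i * (\<sigma> ^^ i) (coeff q j) else 0)"
proof -
  have z: "(\<sigma> ^^ i) 0 = 0" for i by (induction i) (auto simp: s0)
  have inner: "(\<Sum>j\<le>degree q. if i + j = n then coeff p i * (\<sigma> ^^ i) (coeff q j) else 0)
      = (\<Sum>j\<le>M. if i + j = n then coeff p i * (\<sigma> ^^ i) (coeff q j) else 0)" for i
    by (rule sum.mono_neutral_left) (use M in \<open>auto simp: coeff_eq_0 z\<close>)
  have "coeff (skew_mult \<sigma> p q) n = (\<Sum>i\<le>degree p. \<Sum>j\<le>M.
       if i + j = n then coeff p i * (\<sigma> ^^ i) (coeff q j) else 0)"
    unfolding coeff_skew inner ..
  also have "\<dots> = (\<Sum>i\<le>N. \<Sum>j\<le>M.
       if i + j = n then coeff p i * (\<sigma> ^^ i) (coeff q j) else 0)"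
    by (rule sum.mono_neutral_left) (use N in \<open>auto intro!: sum.neutral simp: coeff_eq_0\<close>)
  finally show ?thesis .
qed

lemma coeff_skew_top:
  "coeff (skew_mult \<sigma> p q) (degree p + degree q) = lead_coeff p * (\<sigma> ^^ degree p) (lead_coeff q)"
proof -
  have "(\<Sum>j\<le>degree q. if i + j = degree p + degree q then coeff p i * (\<sigma> ^^ i) (coeff q j) else 0)
      = (if i = degree p then lead_coeff p * (\<sigma> ^^ degree p) (lead_coeff q) else 0)" if "i \<le> degree p" for i
  proof (cases "i = degree p")
    case True then show ?thesis by simp
  next
    case False
    then show ?thesis using that by (auto intro!: sum.neutral)
  qed
  then show ?thesis unfolding coeff_skew by simp
qed

theorem mainTheorem14:
  fixes \<sigma> :: "'a::division_ring \<Rightarrow> 'a" and a :: 'a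
  assumes "ring_automorphism \<sigma>"
  shows "skew_irreducible \<sigma> (monom 1 3 - [:a:]) \<longleftrightarrow>
         (\<forall>b. \<sigma> (\<sigma> b) * \<sigma> b * b \<noteq> a)"
proof -
  have bij: "bij \<sigma>" and sadd: "\<And>x y. \<sigma> (x + y) = \<sigma> x + \<sigma> y"
    and smul: "\<And>x y. \<sigma> (x * y) = \<sigma> x * \<sigma> y" and s1: "\<sigma> 1 = 1"
    using assms unfolding ring_automorphism_def by auto
  have inj: "inj \<sigma>" and surj: "surj \<sigma>" using bij bij_is_inj bij_is_surj by auto
  have s0: "\<sigma> 0 = 0" using sadd[of 0 0] by simp
  have sneg: "\<sigma> (- x) = - \<sigma> x" for x
    using sadd[of x "-x"] s0 by (metis minus_unique add.right_inverse)
  have sz: "\<sigma> x = 0 \<longleftrightarrow> x = 0" for x using inj s0 by (metis injD)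
  have z: "(\<sigma> ^^ i) 0 = 0" for i by (induction i) (auto simp: s0)
  have szi: "(\<sigma> ^^ i) x = 0 \<longleftrightarrow> x = 0" for x i
    using inj_fn[OF inj, of i] z by (metis injD)
  define f where "f = monom (1::'a) 3 - [:a:]"
  have cf: "coeff f n = (if n = 3 then 1 else 0) - (if n = 0 then a else 0)" for n
    unfolding f_def by (simp add: coeff_monom coeff_pCons split: nat.split)
  have df: "degree f = 3"
  proof (rule antisym)
    show "degree f \<le> 3" by (rule degree_le) (auto simp: cf)
    show "3 \<le> degree f" by (rule le_degree) (simp add: cf)
  qed
  have lf: "lead_coeff f = 1" using cf df by simp
  show ?thesis unfolding f_def[symmetric]
  proof
    assume irr: "skew_irreducible \<sigma> f"
    show "\<forall>b. \<sigma> (\<sigma> b) * \<sigma> b * b \<noteq> a"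
    proof (intro allI notI)
      fix b assume N: "\<sigma> (\<sigma> b) * \<sigma> b * b = a"
      define q where "q = [:\<sigma> (\<sigma> b) * \<sigma> b, \<sigma> (\<sigma> b), 1:]"
      define h where "h = [:- b, 1:]"
      have dq: "degree q = 2" unfolding q_def by simp
      have dh: "degree h = 1" unfolding h_def by simp
      have "f = skew_mult \<sigma> q h"
      proof (rule poly_eqI)
        fix n
        have c: "coeff (skew_mult \<sigma> q h) n = (\<Sum>i\<le>2. \<Sum>j\<le>1.
           if i + j = n then coeff q i * (\<sigma> ^^ i) (coeff h j) else 0)"
          by (rule coeff_skew_bound) (use s0 dq dh in auto)
        have "n = 0 \<or> n = 1 \<or> n = 2 \<or> n = 3 \<or> n \<ge> 4" by arith
        then show "coeff f n = coeff (skew_mult \<sigma> q h) n"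
          unfolding c cf using N
          by (auto simp: q_def h_def numeral_2_eq_2 s1 sneg mult.assoc)
      qed
      then have "\<exists>g h. f = skew_mult \<sigma> g h \<and> degree g < degree f \<and> degree h < degree f"
        using dq dh df by (intro exI[of _ q] exI[of _ h]) auto
      then show False using irr unfolding skew_irreducible_def by blast
    qed
  next
    assume nb: "\<forall>b. \<sigma> (\<sigma> b) * \<sigma> b * b \<noteq> a"
    show "skew_irreducible \<sigma> f"
      unfolding skew_irreducible_def
    proof (intro conjI notI)
      assume "skew_unit \<sigma> f"
      then obtain g where fg: "skew_mult \<sigma> f g = [:1:]" unfolding skew_unit_def by auto
      have "coeff (skew_mult \<sigma> f g) (degree f + degree g) = (\<sigma> ^^ 3) (lead_coeff g)"
        using coeff_skew_top[of \<sigma> f g] df lf by simp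
      moreover have "coeff [:1:] (degree f + degree g) = (0::'a)" using df by (simp add: coeff_pCons split: nat.split)
      ultimately have "lead_coeff g = 0" using fg szi by metis
      then have g0: "g = 0" by simp
      have "coeff (skew_mult \<sigma> f g) 0 = 0"
        unfolding coeff_skew g0 using z by (simp add: sum.neutral)
      then show False using fg by simp
    next
      assume "\<exists>g h. f = skew_mult \<sigma> g h \<and> degree g < degree f \<and> degree h < degree f"
      then obtain g h where fgh: "f = skew_mult \<sigma> g h" and dg: "degree g \<le> 2" and dh: "degree h \<le> 2"
        using df by auto
      have c: "coeff f n = (\<Sum>i\<le>2. \<Sum>j\<le>2.
           if i + j = n then coeff g i * (\<sigma> ^^ i) (coeff h j) else 0)" for n
        unfolding fgh by (rule coeff_skew_bound) (use s0 dg dh in auto)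
      define g0 where "g0 = coeff g 0"
      define g1 where "g1 = coeff g 1"
      define g2 where "g2 = coeff g 2"
      define h0 where "h0 = coeff h 0"
      define h1 where "h1 = coeff h 1"
      define h2 where "h2 = coeff h 2"
      have e4: "g2 * \<sigma> (\<sigma> h2) = 0"
        using c[of 4] by (simp add: cf numeral_2_eq_2 g2_def h2_def)
      have e3: "g1 * \<sigma> h2 + g2 * \<sigma> (\<sigma> h1) = 1"
        using c[of 3] by (simp add: cf numeral_2_eq_2 g2_def h2_def g1_def h1_def)
      have e2: "g0 * h2 + g1 * \<sigma> h1 + g2 * \<sigma> (\<sigma> h0) = 0"
        using c[of 2] by (simp add: cf numeral_2_eq_2 g2_def h2_def g1_def h1_def g0_def h0_def)
      have e1: "g0 * h1 + g1 * \<sigma> h0 = 0"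
        using c[of 1] by (simp add: cf numeral_2_eq_2 g2_def h2_def g1_def h1_def g0_def h0_def)
      have e0: "g0 * h0 = - a"
        using c[of 0] by (simp add: cf numeral_2_eq_2 g2_def h2_def g1_def h1_def g0_def h0_def)
      have ss0: "\<sigma> (\<sigma> 0) = 0" using s0 by simp
      show False
      proof (cases "h2 = 0")
        case True
        then have e3': "g2 * \<sigma> (\<sigma> h1) = 1" using e3 s0 by simp
        then have "h1 \<noteq> 0" using ss0 by auto
        define b where "b = - (inverse h1 * h0)"
        have hb: "h0 = - (h1 * b)" unfolding b_def using \<open>h1 \<noteq> 0\<close>
          by (simp add: mult.assoc[symmetric])
        have sh0: "\<sigma> h0 = - (\<sigma> h1 * \<sigma> b)" unfolding hb by (simp add: sneg smul)
        have ssh0: "\<sigma> (\<sigma> h0) = - (\<sigma> (\<sigma> h1) * \<sigma> (\<sigma> b))" unfolding sh0 by (simp add: sneg smul)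
        have A: "g1 * \<sigma> h1 = \<sigma> (\<sigma> b)"
        proof -
          have "g1 * \<sigma> h1 = - (g2 * \<sigma> (\<sigma> h0))" using e2 True s0
            by (simp add: eq_neg_iff_add_eq_0)
          also have "\<dots> = g2 * \<sigma> (\<sigma> h1) * \<sigma> (\<sigma> b)" unfolding ssh0 by (simp add: mult.assoc)
          finally show ?thesis using e3' by simp
        qed
        have B: "g0 * h1 = \<sigma> (\<sigma> b) * \<sigma> b"
        proof -
          have "g0 * h1 = - (g1 * \<sigma> h0)" using e1 by (simp add: eq_neg_iff_add_eq_0)
          also have "\<dots> = g1 * \<sigma> h1 * \<sigma> b" unfolding sh0 by (simp add: mult.assoc)
          finally show ?thesis using A by simp
        qed
        have "a = g0 * h1 * b" using e0 unfolding hb by (simp add: mult.assoc)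
        then have "\<sigma> (\<sigma> b) * \<sigma> b * b = a" using B by simp
        then show False using nb by blast
      next
        case False
        then have "g2 = 0" using e4 sz by auto
        then have e3': "g1 * \<sigma> h2 = 1" using e3 ss0 by simp
        have e2': "g1 * \<sigma> h1 = - (g0 * h2)" using e2 \<open>g2 = 0\<close>
          by (simp add: eq_neg_iff_add_eq_0 add.commute)
        have e1': "g1 * \<sigma> h0 = - (g0 * h1)" using e1
          by (simp add: eq_neg_iff_add_eq_0 add.commute)
        define k where "k = inv \<sigma> g1"
        have sk: "\<sigma> k = g1" unfolding k_def by (rule surj_f_inv_f[OF surj])
        have "\<sigma> (k * h2) = \<sigma> 1" using sk e3' smul s1 by simp
        then have kh: "k * h2 = 1" using inj by (metis injD)
        then have "inverse k = h2" by (rule inverse_unique)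
        moreover have "k \<noteq> 0" using kh by auto
        ultimately have hk: "h2 * k = 1" by auto
        define d where "d = k * h1"
        define e where "e = k * h0"
        define c where "c = - (g0 * h2)"
        define b where "b = inv \<sigma> d"
        have sb: "\<sigma> b = d" unfolding b_def by (rule surj_f_inv_f[OF surj])
        have ssb: "\<sigma> (\<sigma> b) = c" unfolding sb d_def c_def using smul sk e2' by simp
        have se: "\<sigma> e = c * d"
        proof -
          have "\<sigma> e = - (g0 * h1)" unfolding e_def using smul sk e1' by simp
          also have "\<dots> = - (g0 * (h2 * k) * h1)" using hk by simp
          also have "\<dots> = c * d" unfolding c_def d_def by (simp add: mult.assoc)
          finally show ?thesis .
        qed
        have "\<sigma> (d * b) = \<sigma> e" using smul sb ssb se by simp
        then have db: "d * b = e" using inj by (metis injD)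
        have "\<sigma> (\<sigma> b) * \<sigma> b * b = c * e" using ssb sb db by (simp add: mult.assoc)
        also have "\<dots> = - (g0 * (h2 * k) * h0)" unfolding c_def e_def by (simp add: mult.assoc)
        also have "\<dots> = a" using hk e0 by simp
        finally show False using nb by blast
      qed
    qed
  qed
qed

end
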